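(* Let $X$ and $Y$ be independent random variables such that, for the same $D>0$ and $\sigma^2>0$, $\mathbb{P}(|X|\ge x)\le De^{-x^2/(2\sigma^2)}$ and $\mathbb{P}(|Y|\ge x)\le De^{-x^2/(2\sigma^2)}$ for every $x>0$. Then for every $z>0$ and $k>0$, $$\mathbb{P}(X+Y\ge z)\le\big(1+D\sqrt{k/e}\sqrt{2\pi}\big)^2e^{-\frac{z^2}{4(1+1/k)\sigma^2}}.$$ *)

theory Defs
  imports "HOL-Probability.Probability"
begin

end

theory Submission
  imports Defs
begin


lemma ftc_exp:
  fixes t x :: real assumes "t > 0" "x \<ge> 0"
  shows "(\<integral>\<^sup>+s. ennreal (t * exp (t * s)) * indicator {0..x} s \<partial>lborel) = ennreal (exp (t * x) - 1)"
proof -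
  have "((\<lambda>s. t * exp (t * s)) has_integral (exp (t * x) - exp (t * 0))) {0..x}"
    apply (rule fundamental_theorem_of_calculus[OF assms(2)])
    by (auto intro!: derivative_eq_intros simp: has_real_derivative_iff_has_vector_derivative[symmetric])
  then show ?thesis
    by (intro nn_integral_has_integral_lebesgue') (use assms in auto)
qed

lemma pointwise_exp:
  fixes t x :: real assumes "t > 0"
  shows "ennreal (exp (t * x)) \<le> 1 + (\<integral>\<^sup>+s. ennreal (t * exp (t * s)) * indicator {0..x} s \<partial>lborel)"
proof (cases "x \<ge> 0")
  case True
  have ge: "exp (t * x) \<ge> 1" using assms True by simp
  have "ennreal (exp (t * x)) = ennreal (1 + (exp (t * x) - 1))" by simp
  also have "\<dots> = 1 + ennreal (exp (t * x) - 1)"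
    using ge by (subst ennreal_plus) auto
  finally have "ennreal (exp (t * x)) = 1 + ennreal (exp (t * x) - 1)" .
  then show ?thesis using ftc_exp[OF assms True] by simp
next
  case False
  then have "exp (t * x) \<le> 1" using assms mult_pos_neg[of t x] by simp
  then have "ennreal (exp (t * x)) \<le> 1" by (simp add: ennreal_le_1)
  then show ?thesis by (meson add_increasing2 order_trans zero_le)
qed

lemma gauss_nn:
  fixes t D s2 :: real assumes "t > 0" "D > 0" "s2 > 0"
  shows "(\<integral>\<^sup>+s. ennreal (t * exp (t * s) * (D * exp (- s\<^sup>2 / (2 * s2)))) \<partial>lborel)
     = ennreal (D * t * sqrt (2 * pi * s2) * exp (s2 * t\<^sup>2 / 2))"
proof -
  define c where "c = D * t * sqrt (2 * pi * s2) * exp (s2 * t\<^sup>2 / 2)"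
  have c: "c \<ge> 0" using assms by (simp add: c_def)
  have eq: "t * exp (t * s) * (D * exp (- s\<^sup>2 / (2 * s2))) = c * normal_density (s2 * t) (sqrt s2) s" for s
  proof -
    have "exp (t * s) * exp (- s\<^sup>2 / (2 * s2)) = exp (s2 * t\<^sup>2 / 2) * exp (-(s - s2 * t)\<^sup>2 / (2 * s2))"
      unfolding exp_add[symmetric] using assms by (intro arg_cong[where f=exp]) (simp add: field_simps power2_eq_square)
    moreover have "sqrt (2 * pi * s2) > 0" using assms by simp
    ultimately show ?thesis using assms
      by (simp add: c_def normal_density_def real_sqrt_mult)
  qed
  have "(\<integral>\<^sup>+s. ennreal (c * normal_density (s2 * t) (sqrt s2) s) \<partial>lborel)
      = ennreal c * (\<integral>\<^sup>+s. ennreal (normal_density (s2 * t) (sqrt s2) s) \<partial>lborel)"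
    using c by (simp add: ennreal_mult nn_integral_cmult)
  also have "(\<integral>\<^sup>+s. ennreal (normal_density (s2 * t) (sqrt s2) s) \<partial>lborel) = 1"
    using assms by (subst nn_integral_eq_integral) auto
  finally show ?thesis unfolding eq c_def by simp
qed

lemma mgf_bound:
  fixes M :: "'a measure" and X :: "'a \<Rightarrow> real" and D s2 t :: real
  assumes PS: "prob_space M" and Xm: "X \<in> borel_measurable M"
    and "D > 0" "s2 > 0" "t > 0"
    and tail: "\<And>x. x > 0 \<Longrightarrow> measure M {\<omega> \<in> space M. \<bar>X \<omega>\<bar> \<ge> x} \<le> D * exp (- x\<^sup>2 / (2 * s2))"
  shows "(\<integral>\<^sup>+\<omega>. ennreal (exp (t * X \<omega>)) \<partial>M) \<le> ennreal (1 + D * t * sqrt (2 * pi * s2) * exp (s2 * t\<^sup>2 / 2))"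
proof -
  interpret prob_space M by (rule PS)
  interpret P: pair_sigma_finite M lborel by unfold_locales
  note [measurable] = Xm
  define g where "g s = ennreal (t * exp (t * s))" for s
  have gm[measurable]: "g \<in> borel_measurable borel" unfolding g_def by measurable
  define F where "F \<omega> s = g s * indicator {0..X \<omega>} s" for \<omega> s
  have F_eq: "F \<omega> s = g s * (if 0 \<le> s \<and> s \<le> X \<omega> then 1 else 0)" for \<omega> s
    by (simp add: F_def indicator_def)
  have Fm: "case_prod F \<in> borel_measurable (M \<Otimes>\<^sub>M lborel)"
    unfolding F_eq[abs_def] by measurable
  have Fm2: "(\<lambda>\<omega>. \<integral>\<^sup>+s. F \<omega> s \<partial>lborel) \<in> borel_measurable M"
    using Fm by (rule sigma_finite_measure.borel_measurable_nn_integral[OF sigma_finite_lborel])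
  have "(\<integral>\<^sup>+\<omega>. ennreal (exp (t * X \<omega>)) \<partial>M) \<le> (\<integral>\<^sup>+\<omega>. 1 + (\<integral>\<^sup>+s. F \<omega> s \<partial>lborel) \<partial>M)"
    using pointwise_exp[OF \<open>t > 0\<close>] by (intro nn_integral_mono) (simp add: F_def g_def)
  also have "\<dots> = 1 + (\<integral>\<^sup>+\<omega>. (\<integral>\<^sup>+s. F \<omega> s \<partial>lborel) \<partial>M)"
    using Fm2 by (subst nn_integral_add) (auto simp: emeasure_space_1)
  finally have step1: "(\<integral>\<^sup>+\<omega>. ennreal (exp (t * X \<omega>)) \<partial>M) \<le> 1 + (\<integral>\<^sup>+\<omega>. (\<integral>\<^sup>+s. F \<omega> s \<partial>lborel) \<partial>M)" .
  have "(\<integral>\<^sup>+\<omega>. (\<integral>\<^sup>+s. F \<omega> s \<partial>lborel) \<partial>M) = (\<integral>\<^sup>+s. (\<integral>\<^sup>+\<omega>. F \<omega> s \<partial>M) \<partial>lborel)"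
    using P.Fubini'[OF Fm] by simp
  also have "\<dots> \<le> (\<integral>\<^sup>+s. ennreal (t * exp (t * s) * (D * exp (- s\<^sup>2 / (2 * s2)))) \<partial>lborel)"
  proof (intro nn_integral_mono_AE)
    show "AE s in lborel. (\<integral>\<^sup>+\<omega>. F \<omega> s \<partial>M) \<le> ennreal (t * exp (t * s) * (D * exp (- s\<^sup>2 / (2 * s2))))"
      using AE_lborel_singleton[of "0::real"]
    proof eventually_elim
      case (elim s)
      show ?case
      proof (cases "s > 0")
        case False
        then have "F \<omega> s = 0" for \<omega> using elim by (simp add: F_def)
        then show ?thesis by simp
      next
        case True
        have "(\<integral>\<^sup>+\<omega>. F \<omega> s \<partial>M) = (\<integral>\<^sup>+\<omega>. g s * indicator {\<omega> \<in> space M. s \<le> X \<omega>} \<omega> \<partial>M)"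
          using True by (intro nn_integral_cong) (auto simp: F_def indicator_def)
        also have "\<dots> = g s * emeasure M {\<omega> \<in> space M. s \<le> X \<omega>}"
          by (rule nn_integral_cmult_indicator) measurable
        also have "\<dots> \<le> g s * emeasure M {\<omega> \<in> space M. \<bar>X \<omega>\<bar> \<ge> s}"
          by (intro mult_left_mono emeasure_mono) auto
        also have "emeasure M {\<omega> \<in> space M. \<bar>X \<omega>\<bar> \<ge> s} = ennreal (measure M {\<omega> \<in> space M. \<bar>X \<omega>\<bar> \<ge> s})"
          by (simp add: emeasure_eq_measure)
        also have "\<dots> \<le> ennreal (D * exp (- s\<^sup>2 / (2 * s2)))"
          using tail[OF True] by (rule ennreal_leI)
        finally show ?thesis
          using \<open>t > 0\<close> by (simp add: g_def ennreal_mult'[symmetric] mult_left_mono)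
      qed
    qed
  qed
  also have "\<dots> = ennreal (D * t * sqrt (2 * pi * s2) * exp (s2 * t\<^sup>2 / 2))"
    by (rule gauss_nn) (use assms in auto)
  finally have fin: "(\<integral>\<^sup>+\<omega>. ennreal (exp (t * X \<omega>)) \<partial>M) \<le> 1 + ennreal (D * t * sqrt (2 * pi * s2) * exp (s2 * t\<^sup>2 / 2))"
    using step1 by (meson add_left_mono order_trans)
  have "1 + ennreal (D * t * sqrt (2 * pi * s2) * exp (s2 * t\<^sup>2 / 2)) = ennreal (1 + D * t * sqrt (2 * pi * s2) * exp (s2 * t\<^sup>2 / 2))"
    using assms by (subst ennreal_plus) auto
  with fin show ?thesis by simp
qed

lemma y_bound:
  fixes y k :: real assumes "k > 0"
  shows "y \<le> sqrt (k / exp 1) * exp (y\<^sup>2 / (2 * k))"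
proof (cases "y \<le> 0")
  case True
  have "0 \<le> sqrt (k / exp 1) * exp (y\<^sup>2 / (2 * k))" using assms by simp
  then show ?thesis using True by linarith
next
  case False
  define v where "v = y\<^sup>2 / k"
  have "v \<le> exp (v - 1)" using exp_ge_add_one_self[of "v - 1"] by simp
  then have "y\<^sup>2 \<le> k * exp (v - 1)" using assms by (simp add: v_def field_simps)
  also have "exp (v - 1) = (exp (y\<^sup>2 / (2 * k)))\<^sup>2 / exp 1"
    by (simp add: v_def exp_diff power2_eq_square exp_add[symmetric])
  finally have "y\<^sup>2 \<le> (sqrt (k / exp 1) * exp (y\<^sup>2 / (2 * k)))\<^sup>2"
    using assms by (simp add: power_mult_distrib)
  then show ?thesis
    by (rule power2_le_imp_le) (use assms in simp)
qed

lemma const_bound: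
  fixes D s2 t k :: real assumes "D > 0" "s2 > 0" "t > 0" "k > 0"
  shows "1 + D * t * sqrt (2 * pi * s2) * exp (s2 * t\<^sup>2 / 2)
     \<le> (1 + D * sqrt (k / exp 1) * sqrt (2 * pi)) * exp ((1 + 1 / k) * s2 * t\<^sup>2 / 2)"
proof -
  define y where "y = t * sqrt s2"
  have y2: "y\<^sup>2 = s2 * t\<^sup>2" using assms by (simp add: y_def power_mult_distrib)
  have e: "exp ((1 + 1 / k) * s2 * t\<^sup>2 / 2) = exp (y\<^sup>2 / (2 * k)) * exp (s2 * t\<^sup>2 / 2)"
    using assms by (simp add: y2 exp_add[symmetric] field_simps)
  have "D * t * sqrt (2 * pi * s2) * exp (s2 * t\<^sup>2 / 2) = D * sqrt (2 * pi) * y * exp (s2 * t\<^sup>2 / 2)"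
    by (simp add: y_def real_sqrt_mult)
  also have "\<dots> \<le> D * sqrt (2 * pi) * (sqrt (k / exp 1) * exp (y\<^sup>2 / (2 * k))) * exp (s2 * t\<^sup>2 / 2)"
    using assms y_bound[of k y] by (intro mult_right_mono mult_left_mono) auto
  finally have A: "D * t * sqrt (2 * pi * s2) * exp (s2 * t\<^sup>2 / 2) \<le> D * sqrt (k / exp 1) * sqrt (2 * pi) * exp ((1 + 1 / k) * s2 * t\<^sup>2 / 2)"
    unfolding e by (simp add: mult_ac)
  have B: "1 \<le> exp ((1 + 1 / k) * s2 * t\<^sup>2 / 2)" using assms by simp
  have "(1 + D * sqrt (k / exp 1) * sqrt (2 * pi)) * exp ((1 + 1 / k) * s2 * t\<^sup>2 / 2)
     = exp ((1 + 1 / k) * s2 * t\<^sup>2 / 2) + D * sqrt (k / exp 1) * sqrt (2 * pi) * exp ((1 + 1 / k) * s2 * t\<^sup>2 / 2)"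
    by (simp only: distrib_right mult_1_left)
  then show ?thesis using A B by linarith
qed

lemma indep_nn:
  fixes M :: "'a measure" and X Y :: "'a \<Rightarrow> real" and t :: real
  assumes PS: "prob_space M" and ind: "prob_space.indep_var M borel X borel Y"
  shows "(\<integral>\<^sup>+\<omega>. ennreal (exp (t * X \<omega>) * exp (t * Y \<omega>)) \<partial>M)
       = (\<integral>\<^sup>+\<omega>. ennreal (exp (t * X \<omega>)) \<partial>M) * (\<integral>\<^sup>+\<omega>. ennreal (exp (t * Y \<omega>)) \<partial>M)"
proof -
  interpret prob_space M by (rule PS)
  define f where "f = (\<lambda>x::real. ennreal (exp (t * x)))"
  have fm: "f \<in> borel_measurable borel" unfolding f_def by measurable
  have "indep_var borel (f \<circ> X) borel (f \<circ> Y)"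
    by (rule indep_var_compose[OF ind fm fm])
  then have iv: "indep_vars (\<lambda>_. borel) (case_bool (f \<circ> X) (f \<circ> Y)) UNIV"
    unfolding indep_var_def
    by (rule back_subst[where P="\<lambda>N. indep_vars N _ UNIV"]) (auto split: bool.split)
  have "(\<integral>\<^sup>+\<omega>. (\<Prod>i\<in>UNIV. case_bool (f \<circ> X) (f \<circ> Y) i \<omega>) \<partial>M)
     = (\<Prod>i\<in>UNIV. \<integral>\<^sup>+\<omega>. case_bool (f \<circ> X) (f \<circ> Y) i \<omega> \<partial>M)"
    by (rule indep_vars_nn_integral[OF _ iv]) auto
  then show ?thesis by (simp add: UNIV_bool f_def ennreal_mult' comp_def mult.commute)
qed

theorem lemmaA3:
  fixes M :: "'a measure" and X Y :: "'a \<Rightarrow> real" and D \<sigma>2 z k :: real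
  assumes "prob_space M"
    and "X \<in> borel_measurable M" and "Y \<in> borel_measurable M"
    and "prob_space.indep_var M borel X borel Y"
    and "D > 0" and "\<sigma>2 > 0"
    and "\<And>x. x > 0 \<Longrightarrow> measure M {\<omega> \<in> space M. \<bar>X \<omega>\<bar> \<ge> x} \<le> D * exp (- x\<^sup>2 / (2 * \<sigma>2))"
    and "\<And>x. x > 0 \<Longrightarrow> measure M {\<omega> \<in> space M. \<bar>Y \<omega>\<bar> \<ge> x} \<le> D * exp (- x\<^sup>2 / (2 * \<sigma>2))"
    and "z > 0" and "k > 0"
  shows "measure M {\<omega> \<in> space M. X \<omega> + Y \<omega> \<ge> z}
    \<le> (1 + D * sqrt (k / exp 1) * sqrt (2 * pi))\<^sup>2 * exp (- z\<^sup>2 / (4 * (1 + 1 / k) * \<sigma>2))"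
proof -
  interpret prob_space M by (rule assms(1))
  note [measurable] = assms(2,3)
  define c where "c = 1 + 1 / k"
  have c: "c > 0" using assms by (simp add: c_def add_pos_pos)
  define t where "t = z / (2 * c * \<sigma>2)"
  have t: "t > 0" using assms c by (simp add: t_def)
  define C where "C = 1 + D * sqrt (k / exp 1) * sqrt (2 * pi)"
  define B where "B = C * exp (c * \<sigma>2 * t\<^sup>2 / 2)"
  have C: "C \<ge> 0" using assms by (simp add: C_def)
  have B: "B \<ge> 0" using C by (simp add: B_def)
  have mX: "(\<integral>\<^sup>+\<omega>. ennreal (exp (t * X \<omega>)) \<partial>M) \<le> ennreal B"
    using mgf_bound[OF assms(1,2,5,6) t assms(7)] const_bound[OF assms(5,6) t assms(10)]
    unfolding B_def C_def c_def by (meson ennreal_leI order_trans)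
  have mY: "(\<integral>\<^sup>+\<omega>. ennreal (exp (t * Y \<omega>)) \<partial>M) \<le> ennreal B"
    using mgf_bound[OF assms(1,3,5,6) t assms(8)] const_bound[OF assms(5,6) t assms(10)]
    unfolding B_def C_def c_def by (meson ennreal_leI order_trans)
  have "emeasure M {\<omega> \<in> space M. X \<omega> + Y \<omega> \<ge> z}
      \<le> ennreal (exp (-t * z)) * (\<integral>\<^sup>+\<omega>. ennreal (exp (t * (X \<omega> + Y \<omega>))) * indicator (space M) \<omega> \<partial>M)"
    by (rule Chernoff_ineq_nn_integral_ge[OF t]) auto
  also have "(\<integral>\<^sup>+\<omega>. ennreal (exp (t * (X \<omega> + Y \<omega>))) * indicator (space M) \<omega> \<partial>M)
      = (\<integral>\<^sup>+\<omega>. ennreal (exp (t * X \<omega>) * exp (t * Y \<omega>)) \<partial>M)"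
    by (intro nn_integral_cong) (simp add: distrib_left exp_add)
  also have "\<dots> = (\<integral>\<^sup>+\<omega>. ennreal (exp (t * X \<omega>)) \<partial>M) * (\<integral>\<^sup>+\<omega>. ennreal (exp (t * Y \<omega>)) \<partial>M)"
    by (rule indep_nn[OF assms(1,4)])
  also have "ennreal (exp (-t * z)) * \<dots> \<le> ennreal (exp (-t * z)) * (ennreal B * ennreal B)"
    by (intro mult_left_mono mult_mono mX mY) auto
  also have "\<dots> = ennreal (exp (-t * z) * B * B)"
    using B by (simp add: ennreal_mult mult.assoc)
  also have "exp (-t * z) * B * B = C\<^sup>2 * exp (- z\<^sup>2 / (4 * (1 + 1 / k) * \<sigma>2))"
  proof -
    have "exp (-t * z) * B * B = C\<^sup>2 * (exp (-t * z) * exp (c * \<sigma>2 * t\<^sup>2 / 2) * exp (c * \<sigma>2 * t\<^sup>2 / 2))"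
      by (simp add: B_def power2_eq_square mult_ac)
    also have "exp (-t * z) * exp (c * \<sigma>2 * t\<^sup>2 / 2) * exp (c * \<sigma>2 * t\<^sup>2 / 2) = exp (-t * z + c * \<sigma>2 * t\<^sup>2 / 2 + c * \<sigma>2 * t\<^sup>2 / 2)"
      by (simp only: exp_add)
    also have "-t * z + c * \<sigma>2 * t\<^sup>2 / 2 + c * \<sigma>2 * t\<^sup>2 / 2 = - z\<^sup>2 / (4 * (1 + 1 / k) * \<sigma>2)"
      using c assms unfolding t_def c_def[symmetric] by (simp add: field_simps power2_eq_square)
    finally show ?thesis .
  qed
  finally have "emeasure M {\<omega> \<in> space M. X \<omega> + Y \<omega> \<ge> z} \<le> ennreal (C\<^sup>2 * exp (- z\<^sup>2 / (4 * (1 + 1 / k) * \<sigma>2)))" .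
  then show ?thesis unfolding C_def
    by (subst (asm) emeasure_eq_measure) (subst (asm) ennreal_le_iff; simp)
qed

end
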